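(* Let $\mathfrak A=\langle A,f,g\rangle$ be a betweenness algebra (resp. weak, strong betweenness algebra). Then the Stone map $h\colon A\to 2^{\mathrm{Ult}(A)}$, $h(x)=\{\mathcal U\in\mathrm{Ult}(A)\mid x\in\mathcal U\}$, is an embedding of $\mathfrak A$ into the algebra $\mathrm{Em}^{ps}(\mathfrak A)=\langle 2^{\mathrm{Ult}(A)},\langle Q_f\rangle,[\![S_g]\!]\rangle$, and $\mathrm{Em}^{ps}(\mathfrak A)$ is a betweenness algebra (resp. weak, strong betweenness algebra).
   Context: A PS-algebra is $\langle A,f,g\rangle$, $A$ a Boolean algebra with at least two elements (operations $+,\cdot,-,0,1$), $f,g\colon A^2\to A$, $f$ normal ($f(x,y)=0$ if $x=0$ or $y=0$) and additive in each argument, $g$ co-normal ($g(x,y)=1$ if $x=0$ or $y=0$) and co-additive in each argument ($g(x+x',y)=g(x,y)g(x',y)$, $g(x,y+y')=g(x,y)g(x,y')$). Axioms (for all $x,y,z,a,b$): (ABT0) $x\leq f(x,x)$; (ABT1$_f$) $f(x,y)\leq f(y,x)$; (ABT1$_g$) $g(x,y)\leq g(y,x)$; (ABT2) $y\cdot f(x,z)\leq f(x\cdot f(x,y),z)$; (ABT3) $f(x,g(x,-y)\cdot y)\leq y$; (wMIA) $x\neq0,y\neq0\Rightarrow g(x,y)\leq f(x,y)$; (ABTW) $a\neq0\Rightarrow g(a,a)\leq a$; (ABT2$^{\mathrm s}$) $b\neq0\Rightarrow a\leq f(a,b)$. Betweenness algebra: (ABT0),(ABT1$_f$),(ABT1$_g$),(ABT2),(ABT3),(wMIA).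 Weak betweenness algebra: (ABT0),(ABT1$_f$),(ABT1$_g$),(ABT2),(ABTW). Strong betweenness algebra: (ABT1$_f$),(ABT1$_g$),(ABT3),(wMIA),(ABT2$^{\mathrm s}$). $\mathrm{Ult}(A)$ is the set of ultrafilters of $A$; $Q_f(\mathcal U_1,\mathcal U_2,\mathcal U_3)\iff f[\mathcal U_1\times\mathcal U_3]\subseteq\mathcal U_2$; $S_g(\mathcal U_1,\mathcal U_2,\mathcal U_3)\iff g[\mathcal U_1\times\mathcal U_3]\cap\mathcal U_2\neq\emptyset$. For a ternary relation $R$ on a set $W$ and $X,Y\subseteq W$: $\langle R\rangle(X,Y)=\{u\in W\mid\exists x\in X\,\exists y\in Y\,R(x,u,y)\}$ and $[\![R]\!](X,Y)=\{u\in W\mid\forall x\in X\,\forall y\in Y\,R(x,u,y)\}$. An embedding is an injective map preserving the Boolean operations and $f,g$. *)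

theory Defs
  imports Main
begin

text \<open>A Boolean algebra with at least two elements, given as carrier C with
  join jn (+), meet mt (\<cdot>), complement cp (-), zero z and unit u
  (axiomatised as a complemented distributive lattice).\<close>

definition bool_alg ::
  "'b set \<Rightarrow> ('b \<Rightarrow> 'b \<Rightarrow> 'b) \<Rightarrow> ('b \<Rightarrow> 'b \<Rightarrow> 'b) \<Rightarrow> ('b \<Rightarrow> 'b) \<Rightarrow> 'b \<Rightarrow> 'b \<Rightarrow> bool" where
  "bool_alg C jn mt cp z u \<longleftrightarrow>
     z \<in> C \<and> u \<in> C \<and> z \<noteq> u \<and>
     (\<forall>x\<in>C. \<forall>y\<in>C. jn x y \<in> C \<and> mt x y \<in> C) \<and> (\<forall>x\<in>C. cp x \<in> C) \<and>
     (\<forall>x\<in>C. \<forall>y\<in>C. jn x y = jn y x \<and> mt x y = mt y x) \<and>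
     (\<forall>x\<in>C. \<forall>y\<in>C. \<forall>w\<in>C. jn (jn x y) w = jn x (jn y w) \<and> mt (mt x y) w = mt x (mt y w)) \<and>
     (\<forall>x\<in>C. \<forall>y\<in>C. jn x (mt x y) = x \<and> mt x (jn x y) = x) \<and>
     (\<forall>x\<in>C. \<forall>y\<in>C. \<forall>w\<in>C. mt x (jn y w) = jn (mt x y) (mt x w) \<and>
                           jn x (mt y w) = mt (jn x y) (jn x w)) \<and>
     (\<forall>x\<in>C. jn x (cp x) = u \<and> mt x (cp x) = z)"

definition ba_le :: "('b \<Rightarrow> 'b \<Rightarrow> 'b) \<Rightarrow> 'b \<Rightarrow> 'b \<Rightarrow> bool" where
  "ba_le mt x y \<longleftrightarrow> mt x y = x"

definition ps_alg ::
  "'b set \<Rightarrow> ('b \<Rightarrow> 'b \<Rightarrow> 'b) \<Rightarrow> ('b \<Rightarrow> 'b \<Rightarrow> 'b) \<Rightarrow> ('b \<Rightarrow> 'b) \<Rightarrow> 'b \<Rightarrow> 'b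
    \<Rightarrow> ('b \<Rightarrow> 'b \<Rightarrow> 'b) \<Rightarrow> ('b \<Rightarrow> 'b \<Rightarrow> 'b) \<Rightarrow> bool" where
  "ps_alg C jn mt cp z u f g \<longleftrightarrow>
     bool_alg C jn mt cp z u \<and>
     (\<forall>x\<in>C. \<forall>y\<in>C. f x y \<in> C \<and> g x y \<in> C) \<and>
     (\<forall>x\<in>C. \<forall>y\<in>C. (x = z \<or> y = z) \<longrightarrow> f x y = z) \<and>
     (\<forall>x\<in>C. \<forall>x'\<in>C. \<forall>y\<in>C. f (jn x x') y = jn (f x y) (f x' y) \<and> f y (jn x x') = jn (f y x) (f y x')) \<and>
     (\<forall>x\<in>C. \<forall>y\<in>C. (x = z \<or> y = z) \<longrightarrow> g x y = u) \<and>
     (\<forall>x\<in>C. \<forall>x'\<in>C. \<forall>y\<in>C. g (jn x x') y = mt (g x y) (g x' y) \<and> g y (jn x x') = mt (g y x) (g y x'))"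

definition ABT0 where
  "ABT0 C mt f \<longleftrightarrow> (\<forall>x\<in>C. ba_le mt x (f x x))"
definition ABT1 where
  "ABT1 C mt f \<longleftrightarrow> (\<forall>x\<in>C. \<forall>y\<in>C. ba_le mt (f x y) (f y x))"
definition ABT2 where
  "ABT2 C mt f \<longleftrightarrow> (\<forall>x\<in>C. \<forall>y\<in>C. \<forall>w\<in>C. ba_le mt (mt y (f x w)) (f (mt x (f x y)) w))"
definition ABT3 where
  "ABT3 C mt cp f g \<longleftrightarrow> (\<forall>x\<in>C. \<forall>y\<in>C. ba_le mt (f x (mt (g x (cp y)) y)) y)"
definition wMIA where
  "wMIA C mt z f g \<longleftrightarrow> (\<forall>x\<in>C. \<forall>y\<in>C. x \<noteq> z \<and> y \<noteq> z \<longrightarrow> ba_le mt (g x y) (f x y))"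
definition ABTW where
  "ABTW C mt z g \<longleftrightarrow> (\<forall>a\<in>C. a \<noteq> z \<longrightarrow> ba_le mt (g a a) a)"
definition ABT2s where
  "ABT2s C mt z f \<longleftrightarrow> (\<forall>a\<in>C. \<forall>b\<in>C. b \<noteq> z \<longrightarrow> ba_le mt a (f a b))"

definition betw_alg where
  "betw_alg C jn mt cp z u f g \<longleftrightarrow> ps_alg C jn mt cp z u f g \<and>
     ABT0 C mt f \<and> ABT1 C mt f \<and> ABT1 C mt g \<and> ABT2 C mt f \<and> ABT3 C mt cp f g \<and> wMIA C mt z f g"

definition weak_betw_alg where
  "weak_betw_alg C jn mt cp z u f g \<longleftrightarrow> ps_alg C jn mt cp z u f g \<and>
     ABT0 C mt f \<and> ABT1 C mt f \<and> ABT1 C mt g \<and> ABT2 C mt f \<and> ABTW C mt z g"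

definition strong_betw_alg where
  "strong_betw_alg C jn mt cp z u f g \<longleftrightarrow> ps_alg C jn mt cp z u f g \<and>
     ABT1 C mt f \<and> ABT1 C mt g \<and> ABT3 C mt cp f g \<and> wMIA C mt z f g \<and> ABT2s C mt z f"

definition ps_embedding where
  "ps_embedding C jn mt cp z u f g C' jn' mt' cp' z' u' f' g' h \<longleftrightarrow>
     (\<forall>x\<in>C. h x \<in> C') \<and> inj_on h C \<and>
     (\<forall>x\<in>C. \<forall>y\<in>C. h (jn x y) = jn' (h x) (h y) \<and> h (mt x y) = mt' (h x) (h y)) \<and>
     (\<forall>x\<in>C. h (cp x) = cp' (h x)) \<and> h z = z' \<and> h u = u' \<and>
     (\<forall>x\<in>C. \<forall>y\<in>C. h (f x y) = f' (h x) (h y) \<and> h (g x y) = g' (h x) (h y))"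

definition is_ultrafilter :: "'a::boolean_algebra set \<Rightarrow> bool" where
  "is_ultrafilter U \<longleftrightarrow> top \<in> U \<and> bot \<notin> U \<and>
     (\<forall>x y. x \<in> U \<and> y \<in> U \<longrightarrow> inf x y \<in> U) \<and>
     (\<forall>x y. x \<in> U \<and> x \<le> y \<longrightarrow> y \<in> U) \<and>
     (\<forall>x. x \<in> U \<or> - x \<in> U)"

definition Ult :: "'a::boolean_algebra set set" where
  "Ult = {U. is_ultrafilter U}"

definition Q_rel :: "('a \<Rightarrow> 'a \<Rightarrow> 'a) \<Rightarrow> 'a set \<Rightarrow> 'a set \<Rightarrow> 'a set \<Rightarrow> bool" where
  "Q_rel f U1 U2 U3 \<longleftrightarrow> (\<forall>x\<in>U1. \<forall>y\<in>U3. f x y \<in> U2)"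

definition S_rel :: "('a \<Rightarrow> 'a \<Rightarrow> 'a) \<Rightarrow> 'a set \<Rightarrow> 'a set \<Rightarrow> 'a set \<Rightarrow> bool" where
  "S_rel g U1 U2 U3 \<longleftrightarrow> (\<exists>x\<in>U1. \<exists>y\<in>U3. g x y \<in> U2)"

definition dia :: "('w \<Rightarrow> 'w \<Rightarrow> 'w \<Rightarrow> bool) \<Rightarrow> 'w set \<Rightarrow> 'w set \<Rightarrow> 'w set \<Rightarrow> 'w set" where
  "dia R W X Y = {u \<in> W. \<exists>x\<in>X. \<exists>y\<in>Y. R x u y}"

definition nec :: "('w \<Rightarrow> 'w \<Rightarrow> 'w \<Rightarrow> bool) \<Rightarrow> 'w set \<Rightarrow> 'w set \<Rightarrow> 'w set \<Rightarrow> 'w set" where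
  "nec R W X Y = {u \<in> W. \<forall>x\<in>X. \<forall>y\<in>Y. R x u y}"

definition stone :: "'a::boolean_algebra \<Rightarrow> 'a set set" where
  "stone x = {U \<in> Ult. x \<in> U}"

end

theory Submission
  imports Defs
begin

lemma uf_inf: "is_ultrafilter (U::'a::boolean_algebra set) \<Longrightarrow> (inf a b \<in> U) = (a \<in> U \<and> b \<in> U)"
  unfolding is_ultrafilter_def by (meson inf_le1 inf_le2)
lemma uf_up: "is_ultrafilter (U::'a::boolean_algebra set) \<Longrightarrow> a \<in> U \<Longrightarrow> a \<le> b \<Longrightarrow> b \<in> U"
  unfolding is_ultrafilter_def by blast
lemma uf_top: "is_ultrafilter (U::'a::boolean_algebra set) \<Longrightarrow> top \<in> U"
  unfolding is_ultrafilter_def by blast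
lemma uf_bot: "is_ultrafilter (U::'a::boolean_algebra set) \<Longrightarrow> bot \<notin> U"
  unfolding is_ultrafilter_def by blast
lemma uf_compl: "is_ultrafilter (U::'a::boolean_algebra set) \<Longrightarrow> (- a \<in> U) = (a \<notin> U)"
proof -
  assume u: "is_ultrafilter U"
  have "\<not> (a \<in> U \<and> - a \<in> U)"
  proof
    assume "a \<in> U \<and> - a \<in> U"
    then have "inf a (- a) \<in> U" using uf_inf[OF u] by blast
    then show False using uf_bot[OF u] by simp
  qed
  moreover have "a \<in> U \<or> - a \<in> U" using u unfolding is_ultrafilter_def by blast
  ultimately show ?thesis by blast
qed
lemma uf_sup: "is_ultrafilter (U::'a::boolean_algebra set) \<Longrightarrow> (sup a b \<in> U) = (a \<in> U \<or> b \<in> U)"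
proof -
  assume u: "is_ultrafilter U"
  show ?thesis
  proof
    assume s: "sup a b \<in> U"
    show "a \<in> U \<or> b \<in> U"
    proof (rule ccontr)
      assume "\<not> (a \<in> U \<or> b \<in> U)"
      then have "inf (-a) (-b) \<in> U" using uf_inf[OF u] uf_compl[OF u] by blast
      then have "- sup a b \<in> U" by simp
      then show False using s uf_compl[OF u] by blast
    qed
  next
    assume "a \<in> U \<or> b \<in> U" then show "sup a b \<in> U" using uf_up[OF u] by (meson sup_ge1 sup_ge2)
  qed
qed
lemma uf_eq: "is_ultrafilter (U::'a::boolean_algebra set) \<Longrightarrow> is_ultrafilter V \<Longrightarrow> U \<subseteq> V \<Longrightarrow> U = V"
  by (metis subsetD subsetI subset_antisym uf_compl)
lemma uf_neq: "is_ultrafilter (U::'a::boolean_algebra set) \<Longrightarrow> is_ultrafilter V \<Longrightarrow> U \<noteq> V \<Longrightarrow> \<exists>d\<in>U. - d \<in> V"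
  by (metis subsetI uf_compl uf_eq)

definition filt :: "'a::boolean_algebra set \<Rightarrow> bool" where
  "filt F \<longleftrightarrow> top \<in> F \<and> (\<forall>x y. x \<in> F \<and> y \<in> F \<longrightarrow> inf x y \<in> F) \<and> (\<forall>x y. x \<in> F \<and> x \<le> y \<longrightarrow> y \<in> F)"

lemma uf_exists:
  fixes x :: "'a::boolean_algebra"
  assumes bI: "bot \<in> I" and dI: "\<And>a b. b \<in> I \<Longrightarrow> a \<le> b \<Longrightarrow> a \<in> I"
    and sI: "\<And>a b. a \<in> I \<Longrightarrow> b \<in> I \<Longrightarrow> sup a b \<in> I" and xI: "x \<notin> I"
  shows "\<exists>U. is_ultrafilter U \<and> x \<in> U \<and> U \<inter> I = {}"
proof -
  define A where "A = {F. filt F \<and> x \<in> F \<and> F \<inter> I = {}}"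
  have P: "{c. x \<le> c} \<in> A"
    unfolding A_def filt_def using dI xI by auto
  have "\<exists>M\<in>A. \<forall>X\<in>A. M \<subseteq> X \<longrightarrow> X = M"
  proof (rule subset_Zorn_nonempty)
    show "A \<noteq> {}" using P by blast
  next
    fix C assume ne: "C \<noteq> {}" and ch: "subset.chain A C"
    then have CA: "C \<subseteq> A" and lin: "\<And>X Y. X \<in> C \<Longrightarrow> Y \<in> C \<Longrightarrow> X \<subseteq> Y \<or> Y \<subseteq> X"
      by (auto simp: pred_on.chain_def)
    have "filt (\<Union>C)"
      unfolding filt_def
    proof (intro conjI allI impI)
      show "top \<in> \<Union>C" using ne CA unfolding A_def filt_def by blast
    next
      fix a b assume "a \<in> \<Union>C \<and> b \<in> \<Union>C"
      then obtain X Y where "X \<in> C" "Y \<in> C" "a \<in> X" "b \<in> Y" by blast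
      then show "inf a b \<in> \<Union>C" using lin[of X Y] CA unfolding A_def filt_def by blast
    next
      fix a b assume "a \<in> \<Union>C \<and> a \<le> b"
      then show "b \<in> \<Union>C" using CA unfolding A_def filt_def by blast
    qed
    then show "\<Union>C \<in> A" using ne CA unfolding A_def by blast
  qed
  then obtain M where MA: "M \<in> A" and mx: "\<And>X. X \<in> A \<Longrightarrow> M \<subseteq> X \<Longrightarrow> X = M" by blast
  have fM: "filt M" and xM: "x \<in> M" and MI: "M \<inter> I = {}" using MA unfolding A_def by auto
  have key: "\<exists>d\<in>M. inf d a \<in> I" if aM: "a \<notin> M" for a
  proof (rule ccontr)
    assume nk: "\<not> (\<exists>d\<in>M. inf d a \<in> I)"
    define N where "N = {c. \<exists>d\<in>M. inf d a \<le> c}"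
    have "filt N" unfolding filt_def
    proof (intro conjI allI impI)
      show "top \<in> N" using xM unfolding N_def by auto
    next
      fix p q assume "p \<in> N \<and> q \<in> N"
      then obtain d e where "d \<in> M" "e \<in> M" "inf d a \<le> p" "inf e a \<le> q" unfolding N_def by blast
      moreover have "inf d e \<in> M" using fM \<open>d \<in> M\<close> \<open>e \<in> M\<close> unfolding filt_def by blast
      moreover have "inf (inf d e) a \<le> inf p q" using calculation
        by (meson inf_le1 inf_le2 le_infI order_trans inf_mono)
      ultimately show "inf p q \<in> N" unfolding N_def by blast
    next
      fix p q assume "p \<in> N \<and> p \<le> q"
      then show "q \<in> N" unfolding N_def using order_trans by blast
    qed
    moreover have "x \<in> N" unfolding N_def using xM inf_le1 by blast
    moreover have "N \<inter> I = {}"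
    proof (rule ccontr)
      assume "N \<inter> I \<noteq> {}"
      then obtain c d where "d \<in> M" "inf d a \<le> c" "c \<in> I" unfolding N_def by blast
      then show False using nk dI by blast
    qed
    ultimately have NA: "N \<in> A" unfolding A_def by blast
    have "M \<subseteq> N" unfolding N_def using inf_le1 fM unfolding filt_def by (metis (no_types, lifting) mem_Collect_eq subsetI)
    then have "N = M" using mx NA by blast
    moreover have "a \<in> N" unfolding N_def using xM inf_le2 by blast
    ultimately show False using aM by blast
  qed
  have "is_ultrafilter M"
    unfolding is_ultrafilter_def
  proof (intro conjI allI impI)
    show "top \<in> M" using fM unfolding filt_def by blast
    show "bot \<notin> M" using MI bI by blast
    show "\<And>a b. a \<in> M \<and> b \<in> M \<Longrightarrow> inf a b \<in> M" using fM unfolding filt_def by blast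
    show "\<And>a b. a \<in> M \<and> a \<le> b \<Longrightarrow> b \<in> M" using fM unfolding filt_def by blast
  next
    fix a show "a \<in> M \<or> - a \<in> M"
    proof (rule ccontr)
      assume "\<not> (a \<in> M \<or> - a \<in> M)"
      then obtain d e where d: "d \<in> M" "inf d a \<in> I" and e: "e \<in> M" "inf e (- a) \<in> I"
        using key by blast
      have "inf d e \<in> M" using fM d e unfolding filt_def by blast
      moreover have "inf (inf d e) a \<in> I" by (rule dI[OF d(2) inf_mono[OF inf_le1 order_refl]])
      moreover have "inf (inf d e) (- a) \<in> I" by (rule dI[OF e(2) inf_mono[OF inf_le2 order_refl]])
      ultimately have "inf d e \<in> I" using sI
        by (metis inf_sup_distrib1 inf_top_right sup_compl_top)
      then show False using \<open>inf d e \<in> M\<close> MI by blast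
    qed
  qed
  then show ?thesis using xM MI by blast
qed

lemma uf_exists_nz:
  fixes x :: "'a::boolean_algebra"
  assumes "x \<noteq> bot" shows "\<exists>U. is_ultrafilter U \<and> x \<in> U"
  using uf_exists[of "{bot}" x] assms by (auto simp: bot_unique)


definition nadd :: "('a::boolean_algebra \<Rightarrow> 'a \<Rightarrow> 'a) \<Rightarrow> bool" where
  "nadd f \<longleftrightarrow> (\<forall>x y. f bot y = bot \<and> f x bot = bot) \<and>
     (\<forall>x x' y. f (sup x x') y = sup (f x y) (f x' y) \<and> f y (sup x x') = sup (f y x) (f y x'))"

lemma nadd_mono1: "nadd f \<Longrightarrow> a \<le> a' \<Longrightarrow> f a b \<le> f a' b"
  unfolding nadd_def by (metis sup.absorb_iff2 sup_ge1)
lemma nadd_mono2: "nadd f \<Longrightarrow> b \<le> b' \<Longrightarrow> f a b \<le> f a b'"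
  unfolding nadd_def by (metis sup.absorb_iff2 sup_ge1)

lemma JT:
  fixes f :: "'a::boolean_algebra \<Rightarrow> 'a \<Rightarrow> 'a"
  assumes nf: "nadd f" and u: "is_ultrafilter U" and fx: "f x y \<in> U"
  shows "\<exists>U1 U3. is_ultrafilter U1 \<and> is_ultrafilter U3 \<and> x \<in> U1 \<and> y \<in> U3 \<and> Q_rel f U1 U U3"
proof -
  have "\<exists>U1. is_ultrafilter U1 \<and> x \<in> U1 \<and> U1 \<inter> {a. f a y \<notin> U} = {}"
  proof (rule uf_exists)
    show "bot \<in> {a. f a y \<notin> U}" using nf uf_bot[OF u] unfolding nadd_def by simp
    show "a \<in> {a. f a y \<notin> U}" if "b \<in> {a. f a y \<notin> U}" "a \<le> b" for a b
      using that nadd_mono1[OF nf, of a b y] uf_up[OF u] by blast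
    show "sup a b \<in> {a. f a y \<notin> U}" if "a \<in> {a. f a y \<notin> U}" "b \<in> {a. f a y \<notin> U}" for a b
      using that nf uf_sup[OF u] unfolding nadd_def by simp
    show "x \<notin> {a. f a y \<notin> U}" using fx by simp
  qed
  then obtain U1 where u1: "is_ultrafilter U1" "x \<in> U1" and h1: "\<And>a. a \<in> U1 \<Longrightarrow> f a y \<in> U" by blast
  have "\<exists>U3. is_ultrafilter U3 \<and> y \<in> U3 \<and> U3 \<inter> {b. \<exists>a\<in>U1. f a b \<notin> U} = {}"
  proof (rule uf_exists)
    show "bot \<in> {b. \<exists>a\<in>U1. f a b \<notin> U}" using nf uf_bot[OF u] uf_top[OF u1(1)] unfolding nadd_def by auto
    show "a \<in> {b. \<exists>a\<in>U1. f a b \<notin> U}" if "b \<in> {b. \<exists>a\<in>U1. f a b \<notin> U}" "a \<le> b" for a b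
      using that nadd_mono2[OF nf, of a b] uf_up[OF u] by blast
    show "sup a b \<in> {b. \<exists>a\<in>U1. f a b \<notin> U}" if ha: "a \<in> {b. \<exists>a\<in>U1. f a b \<notin> U}" and hb: "b \<in> {b. \<exists>a\<in>U1. f a b \<notin> U}" for a b
    proof -
      obtain c d where c: "c \<in> U1" "f c a \<notin> U" and d: "d \<in> U1" "f d b \<notin> U" using ha hb by blast
      have cd: "inf c d \<in> U1" using c d uf_inf[OF u1(1)] by blast
      have "f (inf c d) a \<notin> U" using c uf_up[OF u] nadd_mono1[OF nf, of "inf c d" c a] by auto
      moreover have "f (inf c d) b \<notin> U" using d uf_up[OF u] nadd_mono1[OF nf, of "inf c d" d b] by auto
      ultimately have "f (inf c d) (sup a b) \<notin> U" using nf uf_sup[OF u] unfolding nadd_def by simp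
      then show ?thesis using cd by blast
    qed
    show "y \<notin> {b. \<exists>a\<in>U1. f a b \<notin> U}" using h1 by blast
  qed
  then obtain U3 where u3: "is_ultrafilter U3" "y \<in> U3" and h3: "\<And>a b. a \<in> U1 \<Longrightarrow> b \<in> U3 \<Longrightarrow> f a b \<in> U" by blast
  show ?thesis using u1 u3 h3 unfolding Q_rel_def by blast
qed

lemma ps_unpack:
  fixes f g :: "'a::boolean_algebra \<Rightarrow> 'a \<Rightarrow> 'a"
  assumes "ps_alg UNIV sup inf uminus bot top f g"
  shows "nadd f" "nadd (\<lambda>x y. - g x y)" "(bot::'a) \<noteq> top"
  using assms unfolding ps_alg_def nadd_def bool_alg_def by auto

lemma g_anti1: "nadd (\<lambda>x y. - g x y) \<Longrightarrow> a \<le> a' \<Longrightarrow> g a' b \<le> g a b"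
  using nadd_mono1[of "\<lambda>x y. - g x y" a a' b] by simp
lemma g_anti2: "nadd (\<lambda>x y. - g x y) \<Longrightarrow> b \<le> b' \<Longrightarrow> g a b' \<le> g a b"
  using nadd_mono2[of "\<lambda>x y. - g x y" b b' a] by simp

lemma Ult_iff: "U \<in> Ult \<longleftrightarrow> is_ultrafilter U" by (simp add: Ult_def)

lemma stone_f:
  fixes f :: "'a::boolean_algebra \<Rightarrow> 'a \<Rightarrow> 'a"
  assumes nf: "nadd f"
  shows "stone (f x y) = dia (Q_rel f) Ult (stone x) (stone y)"
proof
  show "stone (f x y) \<subseteq> dia (Q_rel f) Ult (stone x) (stone y)"
  proof
    fix U assume "U \<in> stone (f x y)"
    then have u: "is_ultrafilter U" and fx: "f x y \<in> U" unfolding stone_def Ult_iff by auto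
    obtain U1 U3 where h: "is_ultrafilter U1" "is_ultrafilter U3" "x \<in> U1" "y \<in> U3" "Q_rel f U1 U U3"
      using JT[OF nf u fx] by blast
    have "U1 \<in> stone x" "U3 \<in> stone y" "U \<in> Ult" using h u unfolding stone_def Ult_iff by auto
    then show "U \<in> dia (Q_rel f) Ult (stone x) (stone y)" using h(5) unfolding dia_def by blast
  qed
  show "dia (Q_rel f) Ult (stone x) (stone y) \<subseteq> stone (f x y)"
    unfolding stone_def dia_def Q_rel_def by auto
qed

lemma stone_g:
  fixes g :: "'a::boolean_algebra \<Rightarrow> 'a \<Rightarrow> 'a"
  assumes ng: "nadd (\<lambda>x y. - g x y)"
  shows "stone (g x y) = nec (S_rel g) Ult (stone x) (stone y)"
proof
  show "stone (g x y) \<subseteq> nec (S_rel g) Ult (stone x) (stone y)"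
    unfolding stone_def nec_def S_rel_def by auto
  show "nec (S_rel g) Ult (stone x) (stone y) \<subseteq> stone (g x y)"
  proof
    fix U assume U: "U \<in> nec (S_rel g) Ult (stone x) (stone y)"
    then have u: "is_ultrafilter U" unfolding nec_def Ult_iff by blast
    show "U \<in> stone (g x y)"
    proof (rule ccontr)
      assume "U \<notin> stone (g x y)"
      then have "- g x y \<in> U" using u uf_compl[OF u] unfolding stone_def Ult_iff by blast
      then obtain U1 U3 where h: "is_ultrafilter U1" "is_ultrafilter U3" "x \<in> U1" "y \<in> U3"
        "Q_rel (\<lambda>x y. - g x y) U1 U U3" using JT[OF ng u] by blast
      then have "S_rel g U1 U U3" using U unfolding nec_def stone_def Ult_iff by blast
      then show False using h(5) uf_compl[OF u] unfolding S_rel_def Q_rel_def by blast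
    qed
  qed
qed

lemma stone_sub: "stone x \<subseteq> Ult" unfolding stone_def by blast
lemma stone_sup: "stone (sup x y) = stone x \<union> stone y"
  unfolding stone_def Ult_def by (auto simp: uf_sup)
lemma stone_inf: "stone (inf x y) = stone x \<inter> stone y"
  unfolding stone_def Ult_def by (auto simp: uf_inf)
lemma stone_compl: "stone (- x) = Ult - stone x"
  unfolding stone_def Ult_def by (auto simp: uf_compl)
lemma stone_bot: "stone bot = {}"
  unfolding stone_def Ult_def by (auto simp: uf_bot)
lemma stone_top: "stone top = Ult"
  unfolding stone_def Ult_def by (auto simp: uf_top)
lemma stone_inj: "inj_on (stone :: 'a::boolean_algebra \<Rightarrow> _) UNIV"
proof (rule inj_onI)
  fix x y :: 'a assume e: "stone x = stone y"
  show "x = y"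
  proof (rule ccontr)
    assume "x \<noteq> y"
    have "inf x (- y) \<noteq> bot \<or> inf y (- x) \<noteq> bot"
    proof (rule ccontr)
      assume "\<not> (inf x (- y) \<noteq> bot \<or> inf y (- x) \<noteq> bot)"
      then have "inf x (- y) = bot" "inf y (- x) = bot" by auto
      then have "x \<le> y" "y \<le> x" by (simp_all add: inf_shunt)
      then show False using \<open>x \<noteq> y\<close> by simp
    qed
    then obtain U where U: "is_ultrafilter U" "inf x (- y) \<in> U \<or> inf y (- x) \<in> U"
      using uf_exists_nz by blast
    then have "U \<in> stone (inf x (- y)) \<or> U \<in> stone (inf y (- x))"
      unfolding stone_def Ult_def by auto
    then show False using e by (auto simp: stone_inf stone_compl)
  qed
qed

lemma ble: "ba_le inf (x::'a::boolean_algebra) y \<longleftrightarrow> x \<le> y"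
  unfolding ba_le_def by (simp add: inf.absorb_iff1)
lemma bles: "ba_le (\<inter>) X Y \<longleftrightarrow> X \<subseteq> Y"
  unfolding ba_le_def by blast

lemma F0:
  fixes f :: "'a::boolean_algebra \<Rightarrow> 'a \<Rightarrow> 'a"
  assumes nf: "nadd f" and ax: "ABT0 UNIV inf f" and u: "is_ultrafilter u"
  shows "Q_rel f u u u"
  unfolding Q_rel_def
proof (intro ballI)
  fix a b assume a: "a \<in> u" and b: "b \<in> u"
  have c: "inf a b \<in> u" using a b uf_inf[OF u] by blast
  have "inf a b \<le> f (inf a b) (inf a b)" using ax unfolding ABT0_def ble by blast
  also have "\<dots> \<le> f a (inf a b)" by (rule nadd_mono1[OF nf]) simp
  also have "\<dots> \<le> f a b" by (rule nadd_mono2[OF nf]) simp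
  finally show "f a b \<in> u" using c uf_up[OF u] by blast
qed

lemma F1:
  fixes f :: "'a::boolean_algebra \<Rightarrow> 'a \<Rightarrow> 'a"
  assumes ax: "ABT1 UNIV inf f" and u: "is_ultrafilter U2" and q: "Q_rel f U1 U2 U3"
  shows "Q_rel f U3 U2 U1"
  using q ax uf_up[OF u] unfolding Q_rel_def ABT1_def ble by blast

lemma G1:
  fixes g :: "'a::boolean_algebra \<Rightarrow> 'a \<Rightarrow> 'a"
  assumes ax: "ABT1 UNIV inf g" and u: "is_ultrafilter U2" and q: "S_rel g U1 U2 U3"
  shows "S_rel g U3 U2 U1"
  using q ax uf_up[OF u] unfolding S_rel_def ABT1_def ble by blast

lemma F2:
  fixes f :: "'a::boolean_algebra \<Rightarrow> 'a \<Rightarrow> 'a"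
  assumes nf: "nadd f" and ax: "ABT2 UNIV inf f" and x: "is_ultrafilter x"
    and u: "is_ultrafilter u" and z: "is_ultrafilter z" and q: "Q_rel f x u z"
  shows "Q_rel f x x u"
  unfolding Q_rel_def
proof (intro ballI)
  fix a b assume a: "a \<in> x" and b: "b \<in> u"
  show "f a b \<in> x"
  proof (rule ccontr)
    assume "f a b \<notin> x"
    then have a': "inf a (- f a b) \<in> x" using a uf_inf[OF x] uf_compl[OF x] by blast
    define a1 where "a1 = inf a (- f a b)"
    have t: "f a1 top \<in> u" using q a' uf_top[OF z] unfolding Q_rel_def a1_def by blast
    have "inf b (f a1 top) \<le> f (inf a1 (f a1 b)) top" using ax unfolding ABT2_def ble by blast
    moreover have "f a1 b \<le> f a b" unfolding a1_def by (rule nadd_mono1[OF nf]) simp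
    then have "inf a1 (f a1 b) = bot" unfolding a1_def
      by (metis (no_types, lifting) inf.coboundedI1 inf_commute inf_compl_bot_left2 inf_mono le_bot order_refl)
    ultimately have "inf b (f a1 top) \<le> bot" using nf unfolding nadd_def by simp
    then have "inf b (f a1 top) = bot" by (simp add: bot_unique)
    moreover have "inf b (f a1 top) \<in> u" using b t uf_inf[OF u] by blast
    ultimately show False using uf_bot[OF u] by simp
  qed
qed

lemma F3:
  fixes f g :: "'a::boolean_algebra \<Rightarrow> 'a \<Rightarrow> 'a"
  assumes ng: "nadd (\<lambda>x y. - g x y)" and ax: "ABT3 UNIV inf uminus f g"
    and x: "is_ultrafilter x" and u: "is_ultrafilter u" and y: "is_ultrafilter y"
    and q: "Q_rel f x u y" and s: "S_rel g x y u" and ne: "u \<noteq> y"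
  shows False
proof -
  obtain a b where a: "a \<in> x" and b: "b \<in> u" and gy: "g a b \<in> y" using s unfolding S_rel_def by blast
  obtain d where d: "d \<in> u" "- d \<in> y" using uf_neq[OF u y ne] by blast
  define b1 where "b1 = inf b d"
  have b1u: "b1 \<in> u" unfolding b1_def using b d uf_inf[OF u] by blast
  have "g a b \<le> g a b1" unfolding b1_def by (rule g_anti2[OF ng]) simp
  then have g1: "g a b1 \<in> y" using gy uf_up[OF y] by blast
  have nb: "- b1 \<in> y" using d(2) uf_up[OF y] unfolding b1_def by simp
  have c: "inf (g a (- (- b1))) (- b1) \<in> y" using g1 nb uf_inf[OF y] by simp
  have "f a (inf (g a (- (- b1))) (- b1)) \<in> u" using q a c unfolding Q_rel_def by blast
  moreover have "f a (inf (g a (- (- b1))) (- b1)) \<le> - b1" using ax unfolding ABT3_def ble by blast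
  ultimately have "- b1 \<in> u" using uf_up[OF u] by blast
  then show False using b1u uf_compl[OF u] by blast
qed

lemma FW:
  fixes f g :: "'a::boolean_algebra \<Rightarrow> 'a \<Rightarrow> 'a"
  assumes nf: "nadd f" and ng: "nadd (\<lambda>x y. - g x y)" and ax: "wMIA UNIV inf bot f g"
    and x: "is_ultrafilter x" and u: "is_ultrafilter u" and y: "is_ultrafilter y"
    and s: "S_rel g x u y"
  shows "Q_rel f x u y"
  unfolding Q_rel_def
proof (intro ballI)
  obtain a b where a: "a \<in> x" and b: "b \<in> y" and gu: "g a b \<in> u" using s unfolding S_rel_def by blast
  fix a' b' assume a': "a' \<in> x" and b': "b' \<in> y"
  have ax2: "inf a a' \<in> x" using a a' uf_inf[OF x] by blast
  have bx2: "inf b b' \<in> y" using b b' uf_inf[OF y] by blast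
  have "g a b \<le> g (inf a a') b" by (rule g_anti1[OF ng]) simp
  also have "\<dots> \<le> g (inf a a') (inf b b')" by (rule g_anti2[OF ng]) simp
  also have "\<dots> \<le> f (inf a a') (inf b b')"
  proof -
    have "inf a a' \<noteq> bot" "inf b b' \<noteq> bot" using ax2 bx2 uf_bot[OF x] uf_bot[OF y] by auto
    then show ?thesis using ax unfolding wMIA_def ble by blast
  qed
  also have "\<dots> \<le> f a' (inf b b')" by (rule nadd_mono1[OF nf]) simp
  also have "\<dots> \<le> f a' b'" by (rule nadd_mono2[OF nf]) simp
  finally show "f a' b' \<in> u" using gu uf_up[OF u] by blast
qed

lemma FTW:
  fixes g :: "'a::boolean_algebra \<Rightarrow> 'a \<Rightarrow> 'a"
  assumes ng: "nadd (\<lambda>x y. - g x y)" and ax: "ABTW UNIV inf bot g"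
    and x: "is_ultrafilter x" and u: "is_ultrafilter u" and s: "S_rel g x u x"
  shows "u = x"
proof -
  obtain a b where a: "a \<in> x" and b: "b \<in> x" and gu: "g a b \<in> u" using s unfolding S_rel_def by blast
  have "x \<subseteq> u"
  proof
    fix d assume d: "d \<in> x"
    define c where "c = inf (inf a b) d"
    have cx: "c \<in> x" unfolding c_def using a b d uf_inf[OF x] by blast
    have "g a b \<le> g c b" unfolding c_def by (rule g_anti1[OF ng]) (metis inf_le1 order_trans)
    also have "\<dots> \<le> g c c" unfolding c_def by (rule g_anti2[OF ng]) (metis inf_le1 inf_le2 order_trans)
    also have "\<dots> \<le> c" using ax cx uf_bot[OF x] unfolding ABTW_def ble by (metis iso_tuple_UNIV_I)
    also have "\<dots> \<le> d" unfolding c_def by simp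
    finally show "d \<in> u" using gu uf_up[OF u] by blast
  qed
  then show ?thesis using uf_eq[OF x u] by simp
qed

lemma F2s:
  fixes f :: "'a::boolean_algebra \<Rightarrow> 'a \<Rightarrow> 'a"
  assumes ax: "ABT2s UNIV inf bot f" and x: "is_ultrafilter x" and y: "is_ultrafilter y"
  shows "Q_rel f x x y"
  unfolding Q_rel_def
proof (intro ballI)
  fix a b assume a: "a \<in> x" and b: "b \<in> y"
  have "b \<noteq> bot" using b uf_bot[OF y] by auto
  then have "a \<le> f a b" using ax unfolding ABT2s_def ble by blast
  then show "f a b \<in> x" using a uf_up[OF x] by blast
qed


lemma emb:
  fixes f g :: "'a::boolean_algebra \<Rightarrow> 'a \<Rightarrow> 'a"
  assumes ps: "ps_alg UNIV sup inf uminus bot top f g"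
  shows "ps_embedding UNIV sup inf uminus bot top f g
        (Pow Ult) (\<union>) (\<inter>) (\<lambda>X. Ult - X) {} Ult (dia (Q_rel f) Ult) (nec (S_rel g) Ult) stone"
  unfolding ps_embedding_def
  by (simp add: stone_sub stone_inj stone_sup stone_inf stone_compl stone_bot stone_top
    stone_f[OF ps_unpack(1)[OF ps]] stone_g[OF ps_unpack(2)[OF ps]])

lemma cps:
  fixes f g :: "'a::boolean_algebra \<Rightarrow> 'a \<Rightarrow> 'a"
  assumes ps: "ps_alg UNIV sup inf uminus bot top f g"
  shows "ps_alg (Pow Ult) (\<union>) (\<inter>) (\<lambda>X. Ult - X) {} Ult (dia (Q_rel f) Ult) (nec (S_rel g) Ult)"
proof -
  have "(top::'a) \<noteq> bot" using ps_unpack(3)[OF ps] by simp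
  then obtain U :: "'a set" where "is_ultrafilter U" using uf_exists_nz by blast
  then have ne: "Ult \<noteq> ({} :: 'a set set)" by (auto simp: Ult_def)
  have ba: "bool_alg (Pow (Ult :: 'a set set)) (\<union>) (\<inter>) (\<lambda>X. Ult - X) {} Ult"
    unfolding bool_alg_def using ne by auto
  show ?thesis unfolding ps_alg_def
    using ba by (auto simp: dia_def nec_def)
qed

lemma ax_ABT0:
  fixes f g :: "'a::boolean_algebra \<Rightarrow> 'a \<Rightarrow> 'a"
  assumes ps: "ps_alg UNIV sup inf uminus bot top f g" and ax: "ABT0 UNIV inf f"
  shows "ABT0 (Pow Ult) (\<inter>) (dia (Q_rel f) Ult)"
  unfolding ABT0_def bles
proof (intro ballI subsetI)
  fix X :: "'a set set" and u :: "'a set" assume X: "X \<in> Pow Ult" and u: "u \<in> X"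
  then have "is_ultrafilter u" by (auto simp: Ult_def)
  then have "Q_rel f u u u" using F0[OF ps_unpack(1)[OF ps] ax] by blast
  then show "u \<in> dia (Q_rel f) Ult X X" using X u unfolding dia_def by blast
qed

lemma ax_ABT1f:
  fixes f g :: "'a::boolean_algebra \<Rightarrow> 'a \<Rightarrow> 'a"
  assumes ax: "ABT1 UNIV inf f"
  shows "ABT1 (Pow Ult) (\<inter>) (dia (Q_rel f) Ult)"
  unfolding ABT1_def bles dia_def using F1[OF ax] by (auto simp: Ult_def) blast

lemma ax_ABT1g:
  fixes f g :: "'a::boolean_algebra \<Rightarrow> 'a \<Rightarrow> 'a"
  assumes ax: "ABT1 UNIV inf g"
  shows "ABT1 (Pow Ult) (\<inter>) (nec (S_rel g) Ult)"
  unfolding ABT1_def bles nec_def using G1[OF ax] by (auto simp: Ult_def)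

lemma ax_ABT2:
  fixes f g :: "'a::boolean_algebra \<Rightarrow> 'a \<Rightarrow> 'a"
  assumes ps: "ps_alg UNIV sup inf uminus bot top f g" and ax: "ABT2 UNIV inf f"
  shows "ABT2 (Pow Ult) (\<inter>) (dia (Q_rel f) Ult)"
  unfolding ABT2_def bles
proof (intro ballI subsetI)
  fix X Y Z u assume X: "X \<in> Pow Ult" and Y: "Y \<in> Pow Ult" and Z: "Z \<in> Pow Ult"
    and u: "u \<in> Y \<inter> dia (Q_rel f) Ult X Z"
  then obtain x z where x: "x \<in> X" and z: "z \<in> Z" and q: "Q_rel f x u z" and uU: "u \<in> Ult"
    unfolding dia_def by blast
  have "Q_rel f x x u" using F2[OF ps_unpack(1)[OF ps] ax _ _ _ q] x z uU X Z by (auto simp: Ult_def)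
  then have "x \<in> dia (Q_rel f) Ult X Y" using x u X unfolding dia_def by blast
  then show "u \<in> dia (Q_rel f) Ult (X \<inter> dia (Q_rel f) Ult X Y) Z"
    using x z q uU unfolding dia_def by blast
qed

lemma ax_ABT3:
  fixes f g :: "'a::boolean_algebra \<Rightarrow> 'a \<Rightarrow> 'a"
  assumes ps: "ps_alg UNIV sup inf uminus bot top f g" and ax: "ABT3 UNIV inf uminus f g"
  shows "ABT3 (Pow Ult) (\<inter>) (\<lambda>X. Ult - X) (dia (Q_rel f) Ult) (nec (S_rel g) Ult)"
  unfolding ABT3_def bles
proof (intro ballI subsetI)
  fix X Y u assume X: "X \<in> Pow Ult" and Y: "Y \<in> Pow Ult"
    and u: "u \<in> dia (Q_rel f) Ult X (nec (S_rel g) Ult X (Ult - Y) \<inter> Y)"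
  then obtain x y where x: "x \<in> X" and y: "y \<in> nec (S_rel g) Ult X (Ult - Y)" "y \<in> Y"
    and q: "Q_rel f x u y" and uU: "u \<in> Ult"
    unfolding dia_def by blast
  show "u \<in> Y"
  proof (rule ccontr)
    assume "u \<notin> Y"
    then have s: "S_rel g x y u" using y(1) x uU unfolding nec_def by blast
    have "u \<noteq> y" using \<open>u \<notin> Y\<close> y(2) by blast
    moreover have "is_ultrafilter x" "is_ultrafilter y" "is_ultrafilter u"
      using x X Y y(2) uU by (auto simp: Ult_def)
    ultimately show False using F3[OF ps_unpack(2)[OF ps] ax _ _ _ q s] by blast
  qed
qed

lemma ax_wMIA:
  fixes f g :: "'a::boolean_algebra \<Rightarrow> 'a \<Rightarrow> 'a"
  assumes ps: "ps_alg UNIV sup inf uminus bot top f g" and ax: "wMIA UNIV inf bot f g"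
  shows "wMIA (Pow Ult) (\<inter>) {} (dia (Q_rel f) Ult) (nec (S_rel g) Ult)"
  unfolding wMIA_def bles
proof (intro ballI subsetI impI)
  fix X Y u assume X: "X \<in> Pow Ult" and Y: "Y \<in> Pow Ult" and ne: "X \<noteq> {} \<and> Y \<noteq> {}"
    and u: "u \<in> nec (S_rel g) Ult X Y"
  obtain x y where x: "x \<in> X" and y: "y \<in> Y" using ne by blast
  have s: "S_rel g x u y" and uU: "u \<in> Ult" using u x y unfolding nec_def by auto
  have "Q_rel f x u y" using FW[OF ps_unpack(1)[OF ps] ps_unpack(2)[OF ps] ax _ _ _ s] x y X Y uU
    by (auto simp: Ult_def)
  then show "u \<in> dia (Q_rel f) Ult X Y" using x y uU unfolding dia_def by blast
qed

lemma ax_ABTW: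
  fixes f g :: "'a::boolean_algebra \<Rightarrow> 'a \<Rightarrow> 'a"
  assumes ps: "ps_alg UNIV sup inf uminus bot top f g" and ax: "ABTW UNIV inf bot g"
  shows "ABTW (Pow Ult) (\<inter>) {} (nec (S_rel g) Ult)"
  unfolding ABTW_def bles
proof (intro ballI subsetI impI)
  fix A u assume A: "A \<in> Pow Ult" and ne: "A \<noteq> {}" and u: "u \<in> nec (S_rel g) Ult A A"
  obtain x where x: "x \<in> A" using ne by blast
  have s: "S_rel g x u x" and uU: "u \<in> Ult" using u x unfolding nec_def by auto
  have "u = x" using FTW[OF ps_unpack(2)[OF ps] ax _ _ s] x A uU by (auto simp: Ult_def)
  then show "u \<in> A" using x by simp
qed

lemma ax_ABT2s:
  fixes f g :: "'a::boolean_algebra \<Rightarrow> 'a \<Rightarrow> 'a"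
  assumes ax: "ABT2s UNIV inf bot f"
  shows "ABT2s (Pow Ult) (\<inter>) {} (dia (Q_rel f) Ult)"
  unfolding ABT2s_def bles
proof (intro ballI subsetI impI)
  fix X Y :: "'a set set" and u :: "'a set" assume X: "X \<in> Pow Ult" and Y: "Y \<in> Pow Ult" and ne: "Y \<noteq> {}" and u: "u \<in> X"
  obtain y where y: "y \<in> Y" using ne by blast
  have "Q_rel f u u y" using F2s[OF ax] u y X Y by (auto simp: Ult_def)
  then show "u \<in> dia (Q_rel f) Ult X Y" using u y X unfolding dia_def by blast
qed

theorem theorem42:
  fixes f g :: "'a::boolean_algebra \<Rightarrow> 'a \<Rightarrow> 'a"
  shows
  "(betw_alg UNIV sup inf uminus bot top f g \<longrightarrow>
      ps_embedding UNIV sup inf uminus bot top f g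
        (Pow Ult) (\<union>) (\<inter>) (\<lambda>X. Ult - X) {} Ult (dia (Q_rel f) Ult) (nec (S_rel g) Ult) stone \<and>
      betw_alg (Pow Ult) (\<union>) (\<inter>) (\<lambda>X. Ult - X) {} Ult (dia (Q_rel f) Ult) (nec (S_rel g) Ult)) \<and>
   (weak_betw_alg UNIV sup inf uminus bot top f g \<longrightarrow>
      ps_embedding UNIV sup inf uminus bot top f g
        (Pow Ult) (\<union>) (\<inter>) (\<lambda>X. Ult - X) {} Ult (dia (Q_rel f) Ult) (nec (S_rel g) Ult) stone \<and>
      weak_betw_alg (Pow Ult) (\<union>) (\<inter>) (\<lambda>X. Ult - X) {} Ult (dia (Q_rel f) Ult) (nec (S_rel g) Ult)) \<and>
   (strong_betw_alg UNIV sup inf uminus bot top f g \<longrightarrow>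
      ps_embedding UNIV sup inf uminus bot top f g
        (Pow Ult) (\<union>) (\<inter>) (\<lambda>X. Ult - X) {} Ult (dia (Q_rel f) Ult) (nec (S_rel g) Ult) stone \<and>
      strong_betw_alg (Pow Ult) (\<union>) (\<inter>) (\<lambda>X. Ult - X) {} Ult (dia (Q_rel f) Ult) (nec (S_rel g) Ult))"
proof (intro conjI impI)
  assume h: "betw_alg UNIV sup inf uminus bot top f g"
  then have ps: "ps_alg UNIV sup inf uminus bot top f g"
    and a: "ABT0 UNIV inf f" "ABT1 UNIV inf f" "ABT1 UNIV inf g" "ABT2 UNIV inf f"
      "ABT3 UNIV inf uminus f g" "wMIA UNIV inf bot f g"
    unfolding betw_alg_def by simp_all
  show "ps_embedding UNIV sup inf uminus bot top f g
        (Pow Ult) (\<union>) (\<inter>) (\<lambda>X. Ult - X) {} Ult (dia (Q_rel f) Ult) (nec (S_rel g) Ult) stone"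
    by (rule emb[OF ps])
  show "betw_alg (Pow Ult) (\<union>) (\<inter>) (\<lambda>X. Ult - X) {} Ult (dia (Q_rel f) Ult) (nec (S_rel g) Ult)"
    unfolding betw_alg_def
    using cps[OF ps] ax_ABT0[OF ps a(1)] ax_ABT1f[OF a(2)] ax_ABT1g[OF a(3)] ax_ABT2[OF ps a(4)]
      ax_ABT3[OF ps a(5)] ax_wMIA[OF ps a(6)]
    by (intro conjI)
next
  assume h: "weak_betw_alg UNIV sup inf uminus bot top f g"
  then have ps: "ps_alg UNIV sup inf uminus bot top f g"
    and a: "ABT0 UNIV inf f" "ABT1 UNIV inf f" "ABT1 UNIV inf g" "ABT2 UNIV inf f"
      "ABTW UNIV inf bot g"
    unfolding weak_betw_alg_def by simp_all
  show "ps_embedding UNIV sup inf uminus bot top f g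
        (Pow Ult) (\<union>) (\<inter>) (\<lambda>X. Ult - X) {} Ult (dia (Q_rel f) Ult) (nec (S_rel g) Ult) stone"
    by (rule emb[OF ps])
  show "weak_betw_alg (Pow Ult) (\<union>) (\<inter>) (\<lambda>X. Ult - X) {} Ult (dia (Q_rel f) Ult) (nec (S_rel g) Ult)"
    unfolding weak_betw_alg_def
    using cps[OF ps] ax_ABT0[OF ps a(1)] ax_ABT1f[OF a(2)] ax_ABT1g[OF a(3)] ax_ABT2[OF ps a(4)]
      ax_ABTW[OF ps a(5)]
    by (intro conjI)
next
  assume h: "strong_betw_alg UNIV sup inf uminus bot top f g"
  then have ps: "ps_alg UNIV sup inf uminus bot top f g"
    and a: "ABT1 UNIV inf f" "ABT1 UNIV inf g" "ABT3 UNIV inf uminus f g" "wMIA UNIV inf bot f g"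
      "ABT2s UNIV inf bot f"
    unfolding strong_betw_alg_def by simp_all
  show "ps_embedding UNIV sup inf uminus bot top f g
        (Pow Ult) (\<union>) (\<inter>) (\<lambda>X. Ult - X) {} Ult (dia (Q_rel f) Ult) (nec (S_rel g) Ult) stone"
    by (rule emb[OF ps])
  show "strong_betw_alg (Pow Ult) (\<union>) (\<inter>) (\<lambda>X. Ult - X) {} Ult (dia (Q_rel f) Ult) (nec (S_rel g) Ult)"
    unfolding strong_betw_alg_def
    using cps[OF ps] ax_ABT1f[OF a(1)] ax_ABT1g[OF a(2)] ax_ABT3[OF ps a(3)] ax_wMIA[OF ps a(4)]
      ax_ABT2s[OF a(5)]
    by (intro conjI)
qed

end
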